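(* For every $d\ge 1$, $\mu_t(\mathit{BF}(d))=2^d$.
   Context: Binary strings $c=c_0\cdots c_{d-1}$ have positions $0,\dots,d-1$ from the left; $c(i)$ is $c$ with bit $i$ complemented. $\mathit{BF}(d)$ has vertex set $\{[\ell,c]:\ell\in\{0,\dots,d\},\ c\in\{0,1\}^d\}$; for $\ell\in\{0,\dots,d-1\}$, $[\ell,c]$ is adjacent to $[\ell+1,c']$ iff $c'=c$ or $c'=c(\ell)$, and there are no other edges. For a connected graph $G$ and $X\subseteq V(G)$, two vertices $x,y$ are $X$-visible if some shortest $x,y$-path has no internal vertex in $X$. $X$ is a total mutual-visibility set if every two vertices of $V(G)$ are $X$-visible; $\mu_t(G)$ is the maximum size of a total mutual-visibility set. *)

theory Defs
  imports Main
begin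

definition is_walk :: "'a set \<Rightarrow> ('a \<Rightarrow> 'a \<Rightarrow> bool) \<Rightarrow> 'a list \<Rightarrow> bool" where
  "is_walk V E p \<longleftrightarrow> p \<noteq> [] \<and> set p \<subseteq> V \<and>
     (\<forall>i. Suc i < length p \<longrightarrow> E (p ! i) (p ! Suc i))"

definition walk_between :: "'a set \<Rightarrow> ('a \<Rightarrow> 'a \<Rightarrow> bool) \<Rightarrow> 'a \<Rightarrow> 'a \<Rightarrow> 'a list \<Rightarrow> bool" where
  "walk_between V E x y p \<longleftrightarrow> is_walk V E p \<and> hd p = x \<and> last p = y"

text \<open>A shortest x,y-path: an x,y-walk of minimum length (such walks are automatically paths).\<close>
definition shortest_path :: "'a set \<Rightarrow> ('a \<Rightarrow> 'a \<Rightarrow> bool) \<Rightarrow> 'a \<Rightarrow> 'a \<Rightarrow> 'a list \<Rightarrow> bool" where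
  "shortest_path V E x y p \<longleftrightarrow> walk_between V E x y p \<and>
     (\<forall>q. walk_between V E x y q \<longrightarrow> length p \<le> length q)"

definition internal :: "'a list \<Rightarrow> 'a set" where
  "internal p = set (butlast (tl p))"

definition X_visible :: "'a set \<Rightarrow> ('a \<Rightarrow> 'a \<Rightarrow> bool) \<Rightarrow> 'a set \<Rightarrow> 'a \<Rightarrow> 'a \<Rightarrow> bool" where
  "X_visible V E X x y \<longleftrightarrow> (\<exists>p. shortest_path V E x y p \<and> internal p \<inter> X = {})"

definition total_mutual_visibility_set :: "'a set \<Rightarrow> ('a \<Rightarrow> 'a \<Rightarrow> bool) \<Rightarrow> 'a set \<Rightarrow> bool" where
  "total_mutual_visibility_set V E X \<longleftrightarrow> X \<subseteq> V \<and> (\<forall>x\<in>V. \<forall>y\<in>V. X_visible V E X x y)"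

definition mu_t :: "'a set \<Rightarrow> ('a \<Rightarrow> 'a \<Rightarrow> bool) \<Rightarrow> nat" where
  "mu_t V E = Max {card X | X. total_mutual_visibility_set V E X}"

text \<open>Vertex [l,c] is the pair (l, c), c a bool list of length d; position i is c ! i.\<close>
definition bf_verts :: "nat \<Rightarrow> (nat \<times> bool list) set" where
  "bf_verts d = {(l, c). l \<le> d \<and> length c = d}"

definition flip :: "bool list \<Rightarrow> nat \<Rightarrow> bool list" where
  "flip c i = c[i := \<not> c ! i]"

definition bf_arc :: "nat \<Rightarrow> nat \<times> bool list \<Rightarrow> nat \<times> bool list \<Rightarrow> bool" where
  "bf_arc d u v \<longleftrightarrow> u \<in> bf_verts d \<and> v \<in> bf_verts d \<and> fst u < d \<and>
     fst v = fst u + 1 \<and> (snd v = snd u \<or> snd v = flip (snd u) (fst u))"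

definition bf_adj :: "nat \<Rightarrow> nat \<times> bool list \<Rightarrow> nat \<times> bool list \<Rightarrow> bool" where
  "bf_adj d u v \<longleftrightarrow> bf_arc d u v \<or> bf_arc d v u"

end

theory Submission
  imports Defs
begin



lemma card_bool_lists: "card {xs::bool list. length xs = n} = 2 ^ n"
  using card_lists_length_eq[of "UNIV::bool set" n] by simp

lemma finite_bool_lists: "finite {xs::bool list. length xs = n}"
  using finite_lists_length_eq[of "UNIV::bool set" n] by simp

lemma flip_flip[simp]: "flip (flip c i) i = c"
  by (cases "i < length c") (auto simp: flip_def list_update_beyond)

lemma length_flip[simp]: "length (flip c i) = length c"
  by (simp add: flip_def)

lemma nth_flip: "i < length c \<Longrightarrow> flip c j ! i = (if i = j then \<not> c ! i else c ! i)"
  by (simp add: flip_def nth_list_update)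

lemma walk3:
  assumes "u \<in> V" "w \<in> V" "v \<in> V" "E u w" "E w v"
  shows "walk_between V E u v [u,w,v]"
  using assms unfolding walk_between_def is_walk_def
  by (auto simp: less_Suc_eq nth_Cons')

lemma three:
  assumes vis: "X_visible V E X u v" and wk: "walk_between V E u v [u,w0,v]"
    and ne: "u \<noteq> v" and nadj: "\<not> E u v"
  shows "\<exists>w. E u w \<and> E w v \<and> w \<notin> X"
proof -
  obtain p where sp: "shortest_path V E u v p" and int: "internal p \<inter> X = {}"
    using vis unfolding X_visible_def by blast
  have wb: "walk_between V E u v p" and le: "length p \<le> 3"
    using sp wk unfolding shortest_path_def by force+
  have ne0: "p \<noteq> []" and hd: "hd p = u" and lst: "last p = v"
    and adj: "\<And>i. Suc i < length p \<Longrightarrow> E (p ! i) (p ! Suc i)"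
    using wb unfolding walk_between_def is_walk_def by auto
  consider "length p = 1" | "length p = 2" | "length p = 3"
    proof -
    have "0 < length p" using ne0 by simp
    then have "length p = 1 \<or> length p = 2 \<or> length p = 3" using le by presburger
    then show ?thesis using that by blast
  qed
  then show ?thesis
  proof cases
    case 1
    then obtain a where "p = [a]" by (auto simp: length_Suc_conv)
    then show ?thesis using hd lst ne by simp
  next
    case 2
    then obtain a b where "p = [a,b]" by (auto simp: length_Suc_conv numeral_2_eq_2)
    then show ?thesis using hd lst nadj adj[of 0] by simp
  next
    case 3
    then obtain a w b where p: "p = [a,w,b]" by (auto simp: length_Suc_conv numeral_3_eq_3)
    have "internal p = {w}" using p by (simp add: internal_def)
    then show ?thesis using hd lst adj[of 0] adj[of 1] p int by auto
  qed
qed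

lemma swap_visible:
  assumes sp: "shortest_path V E x y p"
    and symE: "\<And>a b. E a b \<Longrightarrow> E b a"
    and sV: "\<And>v. v \<in> V \<Longrightarrow> s v \<in> V"
    and sX: "\<And>v. v \<in> V \<Longrightarrow> s v \<notin> X"
    and sE: "\<And>v w. v \<in> V \<Longrightarrow> E v w \<longleftrightarrow> E (s v) w"
  shows "X_visible V E X x y"
proof -
  define n where "n = length p"
  define f where "f i = (if i = 0 \<or> i = n - 1 then p ! i else s (p ! i))" for i
  define q where "q = map f [0..<n]"
  have wb: "walk_between V E x y p" and mn: "\<And>r. walk_between V E x y r \<Longrightarrow> length p \<le> length r"
    using sp unfolding shortest_path_def by auto
  have ne0: "p \<noteq> []" and pV: "set p \<subseteq> V" and hd: "hd p = x" and lst: "last p = y"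
    and adj: "\<And>i. Suc i < length p \<Longrightarrow> E (p ! i) (p ! Suc i)"
    using wb unfolding walk_between_def is_walk_def by auto
  have n0: "n > 0" using ne0 n_def by simp
  have pVi: "\<And>i. i < n \<Longrightarrow> p ! i \<in> V" using pV n_def by auto
  have lq: "length q = n" by (simp add: q_def)
  have qi: "\<And>i. i < n \<Longrightarrow> q ! i = f i" by (simp add: q_def)
  have fV: "\<And>i. i < n \<Longrightarrow> f i \<in> V" using pVi sV by (simp add: f_def)
  have key: "\<And>a b. a \<in> V \<Longrightarrow> b \<in> V \<Longrightarrow> E a b \<Longrightarrow> E (s a) b \<and> E a (s b) \<and> E (s a) (s b)"
    using sE symE by meson
  have fadj: "\<And>i. Suc i < n \<Longrightarrow> E (f i) (f (Suc i))"
  proof -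
    fix i assume i: "Suc i < n"
    have "E (p ! i) (p ! Suc i)" using adj i n_def by simp
    then have "E (p ! i) (p ! Suc i) \<and> E (s (p ! i)) (p ! Suc i) \<and> E (p ! i) (s (p ! Suc i)) \<and> E (s (p ! i)) (s (p ! Suc i))"
      using key pVi i by simp
    then show "E (f i) (f (Suc i))" unfolding f_def by (cases "i = 0"; cases "Suc i = n - 1") auto
  qed
  have wq: "walk_between V E x y q"
    unfolding walk_between_def is_walk_def
  proof (intro conjI allI impI)
    show "q \<noteq> []" using lq n0 by auto
    show "set q \<subseteq> V" using fV by (auto simp: q_def)
    show "hd q = x" using n0 hd ne0 by (simp add: q_def hd_conv_nth f_def hd_map)
    show "last q = y" using n0 lst ne0 n_def by (simp add: q_def last_conv_nth f_def last_map)
    fix i assume "Suc i < length q"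
    then show "E (q ! i) (q ! Suc i)" using lq qi fadj by simp
  qed
  have sq: "shortest_path V E x y q"
    unfolding shortest_path_def using wq mn lq n_def by simp
  have "internal q \<inter> X = {}"
  proof (rule ccontr)
    assume "internal q \<inter> X \<noteq> {}"
    then obtain z where z: "z \<in> set (butlast (tl q))" "z \<in> X" unfolding internal_def by auto
    then obtain i where i: "i < length (butlast (tl q))" "z = butlast (tl q) ! i"
      by (metis in_set_conv_nth)
    have i2: "Suc i < n - 1" using i lq by simp
    have "z = q ! Suc i" using i by (simp add: nth_butlast nth_tl)
    also have "\<dots> = s (p ! Suc i)" using i2 qi by (simp add: f_def)
    finally show False using z sX pVi i2 by simp
  qed
  then show ?thesis using sq unfolding X_visible_def by blast
qed

lemma rt_walk:
  assumes "E\<^sup>*\<^sup>* x y" "x \<in> V" "\<And>a b. E a b \<Longrightarrow> a \<in> V \<and> b \<in> V"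
  shows "\<exists>p. walk_between V E x y p"
  using assms(1)
proof (induction rule: rtranclp_induct)
  case base
  then show ?case using assms(2) by (rule_tac x="[x]" in exI) (simp add: walk_between_def is_walk_def)
next
  case (step y z)
  then obtain p where p: "walk_between V E x y p" by blast
  have "walk_between V E x z (p @ [z])"
    using p step(2) assms(3)[OF step(2)] unfolding walk_between_def is_walk_def
    apply (auto simp: nth_append last_conv_nth less_Suc_eq)
    subgoal for i by (subgoal_tac "length p - Suc 0 = i") simp_all
    done
  then show ?case by blast
qed

lemma rt_sym:
  assumes "r\<^sup>*\<^sup>* a b" "\<And>x y. r x y \<Longrightarrow> r y x"
  shows "r\<^sup>*\<^sup>* b a"
  using assms(1)
proof (induction rule: rtranclp_induct)
  case base then show ?case by simp
next
  case (step y z)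
  then show ?case using assms(2) by (meson converse_rtranclp_into_rtranclp)
qed

lemma bf_adj_sym: "bf_adj d a b \<Longrightarrow> bf_adj d b a"
  by (auto simp: bf_adj_def)

lemma bf_adj_V: "bf_adj d a b \<Longrightarrow> a \<in> bf_verts d \<and> b \<in> bf_verts d"
  by (auto simp: bf_adj_def bf_arc_def)

lemma bf_down: "l \<le> d \<Longrightarrow> length c = d \<Longrightarrow> (bf_adj d)\<^sup>*\<^sup>* (l, c) (0, c)"
proof (induction l)
  case 0 then show ?case by simp
next
  case (Suc l)
  have "bf_adj d (Suc l, c) (l, c)"
    using Suc.prems by (auto simp: bf_adj_def bf_arc_def bf_verts_def)
  then show ?case using Suc by (meson converse_rtranclp_into_rtranclp Suc_leD)
qed

lemma bf_up: "l \<le> d \<Longrightarrow> length c = d \<Longrightarrow> length c' = d \<Longrightarrow> (\<forall>i. l \<le> i \<and> i < d \<longrightarrow> c ! i = c' ! i)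
   \<Longrightarrow> (bf_adj d)\<^sup>*\<^sup>* (0, c) (l, c')"
proof (induction l arbitrary: c')
  case 0
  then have "c = c'" by (auto intro: nth_equalityI)
  then show ?case by simp
next
  case (Suc l)
  define c1 where "c1 = c'[l := c ! l]"
  have l1: "length c1 = d" using Suc.prems by (simp add: c1_def)
  have "\<forall>i. l \<le> i \<and> i < d \<longrightarrow> c ! i = c1 ! i"
    using Suc.prems by (auto simp: c1_def nth_list_update)
  then have r: "(bf_adj d)\<^sup>*\<^sup>* (0, c) (l, c1)" using Suc l1 by simp
  have "c' = c1 \<or> c' = flip c1 l"
  proof (cases "c' ! l = c ! l")
    case True then have "c1 = c'" unfolding c1_def by (simp add: True[symmetric])
    then show ?thesis by simp
  next
    case False
    have ll: "l < length c'" using Suc.prems by simp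
    have "flip c1 l = c'[l := \<not> c ! l]" unfolding c1_def flip_def
      using ll by simp
    also have "(\<not> c ! l) = c' ! l" using False by blast
    finally have "flip c1 l = c'" by simp
    then show ?thesis by simp
  qed
  then have "bf_adj d (l, c1) (Suc l, c')"
    using Suc.prems l1 by (auto simp: bf_adj_def bf_arc_def bf_verts_def)
  then show ?case using r by (meson rtranclp.rtrancl_into_rtrancl)
qed

lemma bf_conn:
  assumes "x \<in> bf_verts d" "y \<in> bf_verts d"
  shows "\<exists>p. walk_between (bf_verts d) (bf_adj d) x y p"
proof -
  obtain l c l' c' where x: "x = (l, c)" and y: "y = (l', c')" by fastforce
  have h: "l \<le> d" "length c = d" "l' \<le> d" "length c' = d" using assms x y by (auto simp: bf_verts_def)
  have "(bf_adj d)\<^sup>*\<^sup>* (l, c) (0, c)" using bf_down h by simp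
  also have "(bf_adj d)\<^sup>*\<^sup>* (0, c) (d, c')" using bf_up[of d d c c'] h by (simp add: not_le[symmetric])
  also have "(bf_adj d)\<^sup>*\<^sup>* (d, c') (0, c')" using bf_down[of d d c'] h by simp
  also have "(bf_adj d)\<^sup>*\<^sup>* (0, c') (l', c')" using rt_sym[OF bf_down[of l' d c'] bf_adj_sym] h by simp
  finally show ?thesis using rt_walk[of "bf_adj d" x y "bf_verts d"] assms bf_adj_V x y by blast
qed

lemma bf_shortest:
  assumes "x \<in> bf_verts d" "y \<in> bf_verts d"
  shows "\<exists>p. shortest_path (bf_verts d) (bf_adj d) x y p"
proof -
  obtain p0 where "walk_between (bf_verts d) (bf_adj d) x y p0" using bf_conn assms by blast
  from ex_has_least_nat[of "walk_between (bf_verts d) (bf_adj d) x y", OF this, of length]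
  show ?thesis unfolding shortest_path_def by blast
qed



lemma tmv_vis: "total_mutual_visibility_set V E X \<Longrightarrow> x \<in> V \<Longrightarrow> y \<in> V \<Longrightarrow> X_visible V E X x y"
  by (simp add: total_mutual_visibility_set_def)

lemma interior_notin:
  assumes T: "total_mutual_visibility_set (bf_verts d) (bf_adj d) X"
    and l: "0 < l" "l < d" and c: "length c = d"
  shows "(l, c) \<notin> X"
proof
  assume inX: "(l, c) \<in> X"
  let ?u = "(l - 1, c)" and ?v = "(l + 1, c)"
  have V: "?u \<in> bf_verts d" "?v \<in> bf_verts d" "(l, c) \<in> bf_verts d" using l c by (auto simp: bf_verts_def)
  have a1: "bf_adj d ?u (l, c)" using V l by (auto simp: bf_adj_def bf_arc_def)
  have a2: "bf_adj d (l, c) ?v" using V l by (auto simp: bf_adj_def bf_arc_def)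
  have na: "\<not> bf_adj d ?u ?v" using l by (auto simp: bf_adj_def bf_arc_def)
  obtain w where w: "bf_adj d ?u w" "bf_adj d w ?v" "w \<notin> X"
    using three[OF tmv_vis[OF T V(1,2)] walk3[OF V(1,3,2) a1 a2]] na l by fastforce
  obtain lw cw where wd: "w = (lw, cw)" by fastforce
  have lw: "lw = l" using w(1,2) l unfolding wd by (auto simp: bf_adj_def bf_arc_def)
  have c1: "cw = c \<or> cw = flip c (l - 1)" using w(1) l lw unfolding wd by (auto simp: bf_adj_def bf_arc_def)
  have c2: "c = cw \<or> c = flip cw l" using w(2) l lw unfolding wd by (auto simp: bf_adj_def bf_arc_def)
  have lt: "l - 1 < length c" "l - 1 \<noteq> l" using l c by auto
  have "cw = c"
  proof (rule ccontr)
    assume "cw \<noteq> c"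
    then have e: "cw = flip c (l - 1)" "c = flip cw l" using c1 c2 by auto
    have "c ! (l - 1) = cw ! (l - 1)" using e(2) lt by (simp add: nth_flip)
    also have "\<dots> = (\<not> c ! (l - 1))" using e(1) lt by (simp add: nth_flip)
    finally show False by simp
  qed
  then show False using w(3) inX wd lw by simp
qed

lemma level0_pair:
  assumes T: "total_mutual_visibility_set (bf_verts d) (bf_adj d) X"
    and d: "1 \<le> d" and c: "length c = d"
  shows "\<not> ((0, c) \<in> X \<and> (0, flip c 0) \<in> X)"
proof
  assume inX: "(0, c) \<in> X \<and> (0, flip c 0) \<in> X"
  let ?u = "(1::nat, c)" and ?v = "(1::nat, flip c 0)"
  have V: "?u \<in> bf_verts d" "?v \<in> bf_verts d" "(0, c) \<in> bf_verts d" using d c by (auto simp: bf_verts_def)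
  have a1: "bf_adj d ?u (0, c)" using V d by (auto simp: bf_adj_def bf_arc_def)
  have a2: "bf_adj d (0, c) ?v" using V d by (auto simp: bf_adj_def bf_arc_def)
  have lt: "0 < length c" using c d by simp
  have fc: "flip c 0 \<noteq> c" using lt by (metis nth_flip)
  have na: "\<not> bf_adj d ?u ?v" by (auto simp: bf_adj_def bf_arc_def)
  obtain w where w: "bf_adj d ?u w" "bf_adj d w ?v" "w \<notin> X"
    using three[OF tmv_vis[OF T V(1,2)] walk3[OF V(1,3,2) a1 a2]] na fc by fastforce
  obtain lw cw where wd: "w = (lw, cw)" by fastforce
  have "lw = 0 \<or> lw = 2" using w(1) unfolding wd by (auto simp: bf_adj_def bf_arc_def)
  then show False
  proof
    assume "lw = 0"
    then have "c = cw \<or> c = flip cw 0" using w(1) unfolding wd by (auto simp: bf_adj_def bf_arc_def)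
    then have "cw = c \<or> cw = flip c 0" by auto
    then show False using w(3) inX wd \<open>lw = 0\<close> by auto
  next
    assume l2: "lw = 2"
    have e1: "cw = c \<or> cw = flip c 1" using w(1) l2 unfolding wd by (auto simp: bf_adj_def bf_arc_def)
    have e2: "cw = flip c 0 \<or> cw = flip (flip c 0) 1" using w(2) l2 unfolding wd by (auto simp: bf_adj_def bf_arc_def)
    have "cw ! 0 = c ! 0" using e1 lt by (auto simp: nth_flip)
    moreover have "cw ! 0 = (\<not> c ! 0)" using e2 lt by (auto simp: nth_flip)
    ultimately show False by simp
  qed
qed

lemma leveld_pair:
  assumes T: "total_mutual_visibility_set (bf_verts d) (bf_adj d) X"
    and d: "1 \<le> d" and c: "length c = d"
  shows "\<not> ((d, c) \<in> X \<and> (d, flip c (d - 1)) \<in> X)"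
proof
  assume inX: "(d, c) \<in> X \<and> (d, flip c (d - 1)) \<in> X"
  let ?u = "(d - 1, c)" and ?v = "(d - 1, flip c (d - 1))"
  have V: "?u \<in> bf_verts d" "?v \<in> bf_verts d" "(d, c) \<in> bf_verts d" using d c by (auto simp: bf_verts_def)
  have a1: "bf_adj d ?u (d, c)" using V d by (auto simp: bf_adj_def bf_arc_def)
  have a2: "bf_adj d (d, c) ?v" using V d by (auto simp: bf_adj_def bf_arc_def)
  have lt: "d - 1 < length c" using c d by simp
  have fc: "flip c (d - 1) \<noteq> c" using lt by (metis nth_flip)
  have na: "\<not> bf_adj d ?u ?v" by (auto simp: bf_adj_def bf_arc_def)
  obtain w where w: "bf_adj d ?u w" "bf_adj d w ?v" "w \<notin> X"
    using three[OF tmv_vis[OF T V(1,2)] walk3[OF V(1,3,2) a1 a2]] na fc by fastforce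
  obtain lw cw where wd: "w = (lw, cw)" by fastforce
  have "lw = d \<or> lw + 2 = d" using w(1) d unfolding wd by (auto simp: bf_adj_def bf_arc_def)
  then show False
  proof
    assume "lw = d"
    then have "cw = c \<or> cw = flip c (d - 1)" using w(1) d unfolding wd by (auto simp: bf_adj_def bf_arc_def)
    then show False using w(3) inX wd \<open>lw = d\<close> by auto
  next
    assume l2: "lw + 2 = d"
    have e1: "c = cw \<or> c = flip cw lw" using w(1) l2 unfolding wd by (auto simp: bf_adj_def bf_arc_def)
    have e2: "flip c (d - 1) = cw \<or> flip c (d - 1) = flip cw lw" using w(2) l2 unfolding wd by (auto simp: bf_adj_def bf_arc_def)
    have lc: "length cw = d" using w(1) unfolding wd by (auto simp: bf_adj_def bf_arc_def bf_verts_def)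
    have ne: "d - 1 \<noteq> lw" using l2 by simp
    have "c ! (d - 1) = cw ! (d - 1)" using e1 lt ne lc c by (auto simp: nth_flip)
    moreover have "(\<not> c ! (d - 1)) = cw ! (d - 1)" using e2 lt ne lc c
      by (metis nth_flip)
    ultimately show False by simp
  qed
qed



lemma upper:
  assumes T: "total_mutual_visibility_set (bf_verts d) (bf_adj d) X" and d: "1 \<le> d"
  shows "card X \<le> 2 ^ d"
proof -
  let ?L = "{xs::bool list. length xs = d - 1}"
  define A where "A = X \<inter> {v. fst v = 0}"
  define B where "B = X \<inter> {v. fst v = d}"
  have XV: "X \<subseteq> bf_verts d" using T by (simp add: total_mutual_visibility_set_def)
  have XAB: "X \<subseteq> A \<union> B"
  proof
    fix v assume v: "v \<in> X"
    obtain l c where vd: "v = (l, c)" by fastforce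
    have "l \<le> d" "length c = d" using XV v vd by (auto simp: bf_verts_def)
    then have "l = 0 \<or> l = d" using interior_notin[OF T, of l c] v vd by fastforce
    then show "v \<in> A \<union> B" using v vd by (auto simp: A_def B_def)
  qed
  have finL: "finite ?L" by (rule finite_bool_lists)
  have cA: "card A \<le> 2 ^ (d - 1)"
  proof -
    have "inj_on (\<lambda>v. tl (snd v)) A"
    proof
      fix v1 v2 assume v: "v1 \<in> A" "v2 \<in> A" and eq: "tl (snd v1) = tl (snd v2)"
      have f0: "fst v1 = 0" "fst v2 = 0" using v by (auto simp: A_def)
      obtain c1 c2 where vd: "v1 = (0, c1)" "v2 = (0, c2)" using f0 by (metis prod.collapse)
      have lc: "length c1 = d" "length c2 = d" using v vd XV by (auto simp: A_def bf_verts_def)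
      have rest: "\<And>i. 0 < i \<Longrightarrow> i < d \<Longrightarrow> c1 ! i = c2 ! i"
      proof -
        fix i :: nat assume i: "0 < i" "i < d"
        have "c1 ! i = tl c1 ! (i - 1)" using i lc by (cases i) (auto simp: nth_tl)
        also have "\<dots> = tl c2 ! (i - 1)" using eq vd by simp
        also have "\<dots> = c2 ! i" using i lc by (cases i) (auto simp: nth_tl)
        finally show "c1 ! i = c2 ! i" .
      qed
      show "v1 = v2"
      proof (cases "c1 ! 0 = c2 ! 0")
        case True
        have "c1 = c2"
        proof (rule nth_equalityI)
          show "length c1 = length c2" using lc by simp
          fix i assume "i < length c1"
          then show "c1 ! i = c2 ! i" using True rest lc by (cases "i = 0") auto
        qed
        then show ?thesis using vd by simp
      next
        case False
        have "c2 = flip c1 0"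
        proof (rule nth_equalityI)
          show "length c2 = length (flip c1 0)" using lc by simp
          fix i assume "i < length c2"
          then show "c2 ! i = flip c1 0 ! i" using False rest lc by (cases "i = 0") (auto simp: nth_flip)
        qed
        then show ?thesis using level0_pair[OF T d lc(1)] v vd by (auto simp: A_def)
      qed
    qed
    moreover have "(\<lambda>v. tl (snd v)) ` A \<subseteq> ?L" using XV by (auto simp: A_def bf_verts_def)
    ultimately have "card A \<le> card ?L" using card_inj_on_le finL by blast
    then show ?thesis by (simp add: card_bool_lists)
  qed
  have cB: "card B \<le> 2 ^ (d - 1)"
  proof -
    have "inj_on (\<lambda>v. butlast (snd v)) B"
    proof
      fix v1 v2 assume v: "v1 \<in> B" "v2 \<in> B" and eq: "butlast (snd v1) = butlast (snd v2)"
      have f0: "fst v1 = d" "fst v2 = d" using v by (auto simp: B_def)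
      obtain c1 c2 where vd: "v1 = (d, c1)" "v2 = (d, c2)" using f0 by (metis prod.collapse)
      have lc: "length c1 = d" "length c2 = d" using v vd XV by (auto simp: B_def bf_verts_def)
      have rest: "\<And>i. i < d - 1 \<Longrightarrow> c1 ! i = c2 ! i"
      proof -
        fix i :: nat assume i: "i < d - 1"
        have "c1 ! i = butlast c1 ! i" using i lc by (simp add: nth_butlast)
        also have "\<dots> = butlast c2 ! i" using eq vd by simp
        also have "\<dots> = c2 ! i" using i lc by (simp add: nth_butlast)
        finally show "c1 ! i = c2 ! i" .
      qed
      have rest': "\<And>i. i < d \<Longrightarrow> i \<noteq> d - 1 \<Longrightarrow> c1 ! i = c2 ! i" using rest by simp
      show "v1 = v2"
      proof (cases "c1 ! (d - 1) = c2 ! (d - 1)")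
        case True
        have "c1 = c2"
        proof (rule nth_equalityI)
          show "length c1 = length c2" using lc by simp
          fix i assume "i < length c1"
          then show "c1 ! i = c2 ! i" using True rest' lc by (cases "i = d - 1") auto
        qed
        then show ?thesis using vd by simp
      next
        case False
        have "c2 = flip c1 (d - 1)"
        proof (rule nth_equalityI)
          show "length c2 = length (flip c1 (d - 1))" using lc by simp
          fix i assume "i < length c2"
          then show "c2 ! i = flip c1 (d - 1) ! i" using False rest' lc by (cases "i = d - 1") (auto simp: nth_flip)
        qed
        then show ?thesis using leveld_pair[OF T d lc(1)] v vd by (auto simp: B_def)
      qed
    qed
    moreover have "(\<lambda>v. butlast (snd v)) ` B \<subseteq> ?L" using XV by (auto simp: B_def bf_verts_def)
    ultimately have "card B \<le> card ?L" using card_inj_on_le finL by blast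
    then show ?thesis by (simp add: card_bool_lists)
  qed
  have finV: "finite (bf_verts d)"
  proof -
    have "bf_verts d \<subseteq> {..d} \<times> {c::bool list. length c = d}" by (auto simp: bf_verts_def)
    then show ?thesis using finite_bool_lists by (meson finite_SigmaI finite_atMost finite_subset)
  qed
  have finAB: "finite (A \<union> B)" using finite_subset[OF XV finV] by (simp add: A_def B_def)
  have "card X \<le> card (A \<union> B)" using XAB finAB card_mono by blast
  also have "\<dots> \<le> card A + card B" by (rule card_Un_le)
  also have "\<dots> \<le> 2 ^ (d - 1) + 2 ^ (d - 1)" using cA cB by simp
  also have "\<dots> = 2 ^ d" using d by (cases d) auto
  finally show ?thesis .
qed



lemma adj0:
  assumes "length c = d" "1 \<le> d"
  shows "bf_adj d (0, c) w \<longleftrightarrow> (w \<in> bf_verts d \<and> fst w = 1 \<and> (snd w = c \<or> snd w = flip c 0))"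
proof -
  obtain lw cw where w: "w = (lw, cw)" by (cases w)
  have "\<not> bf_arc d (lw, cw) (0, c)" by (simp add: bf_arc_def)
  then show ?thesis using assms unfolding w bf_adj_def bf_arc_def by (auto simp: bf_verts_def)
qed

lemma adjd:
  assumes "length c = d" "1 \<le> d"
  shows "bf_adj d (d, c) w \<longleftrightarrow> (w \<in> bf_verts d \<and> fst w = d - 1 \<and> (snd w = c \<or> snd w = flip c (d - 1)))"
proof -
  obtain lw cw where w: "w = (lw, cw)" by (cases w)
  have "\<not> bf_arc d (d, c) (lw, cw)" by (simp add: bf_arc_def)
  moreover have "bf_arc d (lw, cw) (d, c) \<longleftrightarrow> ((lw, cw) \<in> bf_verts d \<and> lw = d - 1 \<and> (c = cw \<or> c = flip cw lw))"
  proof -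
    have "(d, c) \<in> bf_verts d" using assms by (simp add: bf_verts_def)
    moreover have "(lw < d \<and> d = lw + 1) \<longleftrightarrow> lw = d - 1" using assms by linarith
    ultimately show ?thesis unfolding bf_arc_def fst_conv snd_conv by blast
  qed
  moreover have "(c = cw \<or> c = flip cw lw) \<longleftrightarrow> (cw = c \<or> cw = flip c lw)"
    by (metis flip_flip)
  ultimately show ?thesis unfolding w bf_adj_def fst_conv snd_conv by blast
qed

lemma lower:
  assumes d: "1 \<le> d"
  shows "\<exists>X. total_mutual_visibility_set (bf_verts d) (bf_adj d) X \<and> card X = 2 ^ d"
proof -
  let ?L = "{xs::bool list. length xs = d - 1}"
  define X where "X = (\<lambda>c'. (0::nat, True # c')) ` ?L \<union> (\<lambda>c'. (d, c' @ [True])) ` ?L"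
  define s where "s v = (if fst v = 0 \<and> snd v ! 0 then (0, flip (snd v) 0)
      else if fst v = d \<and> snd v ! (d - 1) then (d, flip (snd v) (d - 1)) else v)" for v
  have memX: "\<And>l c. (l, c) \<in> bf_verts d \<Longrightarrow> (l, c) \<in> X \<longleftrightarrow> (l = 0 \<and> c ! 0) \<or> (l = d \<and> c ! (d - 1))"
  proof -
    fix l c assume v: "(l, c) \<in> bf_verts d"
    then have lc: "length c = d" by (simp add: bf_verts_def)
    show "(l, c) \<in> X \<longleftrightarrow> (l = 0 \<and> c ! 0) \<or> (l = d \<and> c ! (d - 1))"
    proof
      assume "(l, c) \<in> X"
      then show "(l = 0 \<and> c ! 0) \<or> (l = d \<and> c ! (d - 1))"
        unfolding X_def by (auto simp: nth_append)
    next
      assume h: "(l = 0 \<and> c ! 0) \<or> (l = d \<and> c ! (d - 1))"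
      then show "(l, c) \<in> X"
      proof
        assume h0: "l = 0 \<and> c ! 0"
        have "c = True # tl c" using h0 lc d by (cases c) auto
        moreover have "tl c \<in> ?L" using lc by simp
        ultimately show ?thesis unfolding X_def using h0 by (metis UnI1 image_eqI)
      next
        assume h1: "l = d \<and> c ! (d - 1)"
        have "c \<noteq> []" using lc d by auto
        then have "c = butlast c @ [last c]" by simp
        moreover have "last c = True" using h1 lc d \<open>c \<noteq> []\<close> by (simp add: last_conv_nth)
        ultimately have "c = butlast c @ [True]" by simp
        moreover have "butlast c \<in> ?L" using lc by simp
        ultimately show ?thesis unfolding X_def using h1 by (metis UnI2 image_eqI)
      qed
    qed
  qed
  have XV: "X \<subseteq> bf_verts d" unfolding X_def using d by (auto simp: bf_verts_def)
  have sV: "\<And>v. v \<in> bf_verts d \<Longrightarrow> s v \<in> bf_verts d"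
    by (auto simp: s_def bf_verts_def)
  have sX: "\<And>v. v \<in> bf_verts d \<Longrightarrow> s v \<notin> X"
  proof -
    fix v assume v: "v \<in> bf_verts d"
    obtain l c where vd: "v = (l, c)" by fastforce
    have lc: "length c = d" "l \<le> d" using v vd by (auto simp: bf_verts_def)
    have V': "s v \<in> bf_verts d" using sV v .
    show "s v \<notin> X"
    proof (cases "l = 0 \<and> c ! 0")
      case True
      then have "s v = (0, flip c 0)" by (simp add: s_def vd)
      moreover have "\<not> flip c 0 ! 0" using True lc d by (simp add: nth_flip)
      ultimately show ?thesis using memX[of 0 "flip c 0"] V' d by simp
    next
      case F1: False
      show ?thesis
      proof (cases "l = d \<and> c ! (d - 1)")
        case True
        then have "s v = (d, flip c (d - 1))" using F1 by (simp add: s_def vd)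
        moreover have "\<not> flip c (d - 1) ! (d - 1)" using True lc d by (simp add: nth_flip)
        ultimately show ?thesis using memX[of d "flip c (d - 1)"] V' d by simp
      next
        case False
        have n1: "\<not> (fst v = 0 \<and> snd v ! 0)" "\<not> (fst v = d \<and> snd v ! (d - 1))"
          using F1 False vd by auto
        then have "s v = v" by (simp only: s_def if_not_P[OF n1(1)] if_not_P[OF n1(2)] if_False)
        then show ?thesis using memX v vd F1 False by simp
      qed
    qed
  qed
  have sE: "\<And>v w. v \<in> bf_verts d \<Longrightarrow> bf_adj d v w \<longleftrightarrow> bf_adj d (s v) w"
  proof -
    fix v w assume v: "v \<in> bf_verts d"
    obtain l c where vd: "v = (l, c)" by fastforce
    have lc: "length c = d" "l \<le> d" using v vd by (auto simp: bf_verts_def)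
    show "bf_adj d v w \<longleftrightarrow> bf_adj d (s v) w"
    proof (cases "l = 0 \<and> c ! 0")
      case True
      then have sv: "s v = (0, flip c 0)" by (simp add: s_def vd)
      have "bf_adj d (0, c) w \<longleftrightarrow> bf_adj d (0, flip c 0) w"
        using adj0[OF lc(1) d, of w] adj0[of "flip c 0" d w] lc d by auto
      then show ?thesis using sv vd True by simp
    next
      case F1: False
      show ?thesis
      proof (cases "l = d \<and> c ! (d - 1)")
        case True
        then have sv: "s v = (d, flip c (d - 1))" using F1 by (simp add: s_def vd)
        have "bf_adj d (d, c) w \<longleftrightarrow> bf_adj d (d, flip c (d - 1)) w"
          using adjd[OF lc(1) d, of w] adjd[of "flip c (d - 1)" d w] lc d by auto
        then show ?thesis using sv vd True by simp
      next
        case False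
        have n1: "\<not> (fst v = 0 \<and> snd v ! 0)" "\<not> (fst v = d \<and> snd v ! (d - 1))"
          using F1 False vd by auto
        then have "s v = v" by (simp only: s_def if_not_P[OF n1(1)] if_not_P[OF n1(2)] if_False)
        then show ?thesis by simp
      qed
    qed
  qed
  have T: "total_mutual_visibility_set (bf_verts d) (bf_adj d) X"
    unfolding total_mutual_visibility_set_def
  proof (intro conjI ballI XV)
    fix x y assume "x \<in> bf_verts d" "y \<in> bf_verts d"
    then obtain p where "shortest_path (bf_verts d) (bf_adj d) x y p" using bf_shortest by blast
    then show "X_visible (bf_verts d) (bf_adj d) X x y"
      by (rule swap_visible[of "bf_verts d" "bf_adj d" x y p s X, OF _ bf_adj_sym sV sX sE])
  qed
  have cX: "card X = 2 ^ d"
  proof -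
    have i1: "inj_on (\<lambda>c'. (0::nat, True # c')) ?L" by (auto simp: inj_on_def)
    have i2: "inj_on (\<lambda>c'. (d, c' @ [True])) ?L" by (auto simp: inj_on_def)
    have dj: "(\<lambda>c'. (0::nat, True # c')) ` ?L \<inter> (\<lambda>c'. (d, c' @ [True])) ` ?L = {}" using d by auto
    have "card X = card ((\<lambda>c'. (0::nat, True # c')) ` ?L) + card ((\<lambda>c'. (d, c' @ [True])) ` ?L)"
      unfolding X_def using dj finite_bool_lists by (simp add: card_Un_disjoint)
    also have "\<dots> = 2 ^ (d - 1) + 2 ^ (d - 1)" using i1 i2 by (simp add: card_image card_bool_lists)
    also have "\<dots> = 2 ^ d" using d by (cases d) auto
    finally show ?thesis .
  qed
  show ?thesis using T cX by blast
qed

theorem theorem5p6: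
  fixes d :: nat
  assumes "d \<ge> 1"
  shows "mu_t (bf_verts d) (bf_adj d) = 2 ^ d"
proof -
  let ?S = "{card X | X. total_mutual_visibility_set (bf_verts d) (bf_adj d) X}"
  have sub: "?S \<subseteq> {..2 ^ d}" using upper assms by auto
  have fin: "finite ?S" using finite_subset[OF sub] by simp
  obtain X0 where "total_mutual_visibility_set (bf_verts d) (bf_adj d) X0" "card X0 = 2 ^ d"
    using lower[OF assms] by blast
  then have mem: "2 ^ d \<in> ?S" by (metis (mono_tags, lifting) mem_Collect_eq)
  have "Max ?S = 2 ^ d" using Max_eqI[OF fin _ mem] sub by auto
  then show ?thesis by (simp add: mu_t_def)
qed



end
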